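(* Let $\mathcal{G}$ be an ordered groupoid and let $\alpha=(A_g,\alpha_g)_{g\in\mathcal{G}}$ be a preunital partial ordered (P.O.) action of $\mathcal{G}$ on a ring $A$. Then $\alpha$ has a globalization $\beta$ if and only if $\alpha$ is unital.
   Context: A groupoid $\mathcal{G}$ is a small category in which every morphism is invertible; $\mathcal{G}_0\subseteq\mathcal{G}$ denotes the set of identities (objects), $d(g)=g^{-1}g$, $r(g)=gg^{-1}$, and $\mathcal{G}_2=\{(g,h): gh \text{ is defined}\}$. $\mathcal{G}$ is ordered if it carries a partial order $\le$ such that: (OG1) $g\le h\Rightarrow g^{-1}\le h^{-1}$; (OG2) if $g\le h$, $k\le \ell$, and $gk$, $h\ell$ are defined, then $gk\le h\ell$; (OG3) for $g\in\mathcal{G}$, $e\in\mathcal{G}_0$ with $e\le d(g)$ there is a unique $(g|e)\le g$ with $d(g|e)=e$; (OG3* ) for $e\le r(g)$ there is a unique $(e|g)\le g$ with $r(e|g)=e$. A partial action $\alpha=(A_g,\alpha_g)_{g\in\mathcal{G}}$ of $\mathcal{G}$ on a ring $A$ consists of ideals $A_{r(g)}$ of $A$, ideals $A_g$ of $A_{r(g)}$ and ring isomorphisms $\alpha_g:A_{g^{-1}}\to A_g$ such that: (P1) $\alpha_e=\mathrm{Id}_{A_e}$ for $e\in\mathcal{G}_0$ and $A=\sum_{e\in\mathcal{G}_0}A_e$; (P2) $\alpha_h^{-1}(A_{g^{-1}}\cap A_h)\subseteq A_{(gh)^{-1}}$ for $(g,h)\in\mathcal{G}_2$; (P3) $\alpha_g\alpha_h(a)=\alpha_{gh}(a)$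 for $(g,h)\in\mathcal{G}_2$, $a\in\alpha_h^{-1}(A_{g^{-1}}\cap A_h)$. It is a P.O. action if moreover (PO): $g\le h$ implies $A_g\subseteq A_h$ and $\alpha_g=\alpha_h|_{A_{g^{-1}}}$. It is unital if every $A_g$ is generated by (i.e. equals $A1_g$ for) a central idempotent $1_g$ of $A$; it is preunital if every $A_e$, $e\in\mathcal{G}_0$, is a unital ring whose identity $1_e$ is a central idempotent of $A$. A global action is a partial action with $A_g=A_{r(g)}$ for all $g$; an ordered global action is a global action satisfying (PO). A globalization of a P.O. action $\alpha$ on $A$ is an ordered global action $\beta=(B_g,\beta_g)_{g\in\mathcal{G}}$ of $\mathcal{G}$ on a ring $B$ together with injective ring homomorphisms $\varphi_e:A_e\to B_e$ ($e\in\mathcal{G}_0$) such that: (i) $\varphi_e(A_e)$ is an ideal of $B_e$; (ii) $\varphi_{r(g)}(A_g)=\varphi_{r(g)}(A_{r(g)})\cap\beta_g(\varphi_{d(g)}(A_{d(g)}))$ for all $g$; (iii) $\beta_g\circ\varphi_{d(g)}(a)=\varphi_{r(g)}\circ\alpha_g(a)$ for all $g$, $a\in A_{g^{-1}}$; (iv) $B_g=\sum_{r(h)\le r(g)}\beta_h(\varphi_{d(h)}(A_{d(h)}))$ for all $g$. *)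

theory Defs
  imports Main "HOL-Library.Function_Algebras"
begin

text \<open>A groupoid is given by a carrier G, a (total HOL function representing the)
  partial composition m, and inversion iv.  The composite m g h is only meaningful
  when gd g = gr h.\<close>

definition gd :: "('g \<Rightarrow> 'g \<Rightarrow> 'g) \<Rightarrow> ('g \<Rightarrow> 'g) \<Rightarrow> 'g \<Rightarrow> 'g" where
  "gd m iv g = m (iv g) g"

definition gr :: "('g \<Rightarrow> 'g \<Rightarrow> 'g) \<Rightarrow> ('g \<Rightarrow> 'g) \<Rightarrow> 'g \<Rightarrow> 'g" where
  "gr m iv g = m g (iv g)"

definition objects :: "'g set \<Rightarrow> ('g \<Rightarrow> 'g \<Rightarrow> 'g) \<Rightarrow> ('g \<Rightarrow> 'g) \<Rightarrow> 'g set" where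
  "objects G m iv = gd m iv ` G"

definition groupoid :: "'g set \<Rightarrow> ('g \<Rightarrow> 'g \<Rightarrow> 'g) \<Rightarrow> ('g \<Rightarrow> 'g) \<Rightarrow> bool" where
  "groupoid G m iv \<longleftrightarrow>
     (\<forall>g\<in>G. iv g \<in> G \<and> iv (iv g) = g) \<and>
     (\<forall>g\<in>G. \<forall>h\<in>G. gd m iv g = gr m iv h \<longrightarrow>
        m g h \<in> G \<and> gd m iv (m g h) = gd m iv h \<and> gr m iv (m g h) = gr m iv g) \<and>
     (\<forall>g\<in>G. \<forall>h\<in>G. \<forall>k\<in>G. gd m iv g = gr m iv h \<longrightarrow> gd m iv h = gr m iv k \<longrightarrow>
        m (m g h) k = m g (m h k)) \<and>
     (\<forall>g\<in>G. m (gr m iv g) g = g \<and> m g (gd m iv g) = g)"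

definition ordered_groupoid ::
  "'g set \<Rightarrow> ('g \<Rightarrow> 'g \<Rightarrow> 'g) \<Rightarrow> ('g \<Rightarrow> 'g) \<Rightarrow> ('g \<Rightarrow> 'g \<Rightarrow> bool) \<Rightarrow> bool" where
  "ordered_groupoid G m iv le \<longleftrightarrow>
     groupoid G m iv \<and>
     \<comment> \<open>le is a partial order on G\<close>
     (\<forall>g\<in>G. le g g) \<and>
     (\<forall>g\<in>G. \<forall>h\<in>G. le g h \<longrightarrow> le h g \<longrightarrow> g = h) \<and>
     (\<forall>g\<in>G. \<forall>h\<in>G. \<forall>k\<in>G. le g h \<longrightarrow> le h k \<longrightarrow> le g k) \<and>
     \<comment> \<open>OG1\<close>
     (\<forall>g\<in>G. \<forall>h\<in>G. le g h \<longrightarrow> le (iv g) (iv h)) \<and>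
     \<comment> \<open>OG2\<close>
     (\<forall>g\<in>G. \<forall>h\<in>G. \<forall>k\<in>G. \<forall>l\<in>G. le g h \<longrightarrow> le k l \<longrightarrow>
        gd m iv g = gr m iv k \<longrightarrow> gd m iv h = gr m iv l \<longrightarrow> le (m g k) (m h l)) \<and>
     \<comment> \<open>OG3\<close>
     (\<forall>g\<in>G. \<forall>e\<in>objects G m iv. le e (gd m iv g) \<longrightarrow>
        (\<exists>!x. x \<in> G \<and> le x g \<and> gd m iv x = e)) \<and>
     \<comment> \<open>OG3*\<close>
     (\<forall>g\<in>G. \<forall>e\<in>objects G m iv. le e (gr m iv g) \<longrightarrow>
        (\<exists>!x. x \<in> G \<and> le x g \<and> gr m iv x = e))"

definition is_subring :: "'a::ring set \<Rightarrow> bool" where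
  "is_subring R \<longleftrightarrow> 0 \<in> R \<and> (\<forall>x\<in>R. \<forall>y\<in>R. x + y \<in> R \<and> x * y \<in> R) \<and> (\<forall>x\<in>R. - x \<in> R)"

definition is_ideal :: "'a::ring set \<Rightarrow> 'a set \<Rightarrow> bool" where
  "is_ideal I R \<longleftrightarrow> I \<subseteq> R \<and> 0 \<in> I \<and> (\<forall>x\<in>I. \<forall>y\<in>I. x + y \<in> I) \<and> (\<forall>x\<in>I. - x \<in> I) \<and>
     (\<forall>r\<in>R. \<forall>x\<in>I. r * x \<in> I \<and> x * r \<in> I)"

definition set_sum :: "'i set \<Rightarrow> ('i \<Rightarrow> 'a::ab_group_add set) \<Rightarrow> 'a set" where
  "set_sum I F = {sum f S | S f. finite S \<and> S \<subseteq> I \<and> (\<forall>i\<in>S. f i \<in> F i)}"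

definition ring_hom_on :: "('a::ring \<Rightarrow> 'b::ring) \<Rightarrow> 'a set \<Rightarrow> bool" where
  "ring_hom_on f X \<longleftrightarrow> (\<forall>x\<in>X. \<forall>y\<in>X. f (x + y) = f x + f y \<and> f (x * y) = f x * f y)"

definition ring_iso :: "('a::ring \<Rightarrow> 'b::ring) \<Rightarrow> 'a set \<Rightarrow> 'b set \<Rightarrow> bool" where
  "ring_iso f X Y \<longleftrightarrow> bij_betw f X Y \<and> ring_hom_on f X"

definition partial_action ::
  "'g set \<Rightarrow> ('g \<Rightarrow> 'g \<Rightarrow> 'g) \<Rightarrow> ('g \<Rightarrow> 'g) \<Rightarrow> 'a::ring set \<Rightarrow> ('g \<Rightarrow> 'a set) \<Rightarrow> ('g \<Rightarrow> 'a \<Rightarrow> 'a) \<Rightarrow> bool"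
  where
  "partial_action G m iv R D al \<longleftrightarrow>
     is_subring R \<and>
     (\<forall>e\<in>objects G m iv. is_ideal (D e) R) \<and>
     (\<forall>g\<in>G. is_ideal (D g) (D (gr m iv g))) \<and>
     (\<forall>g\<in>G. ring_iso (al g) (D (iv g)) (D g)) \<and>
     \<comment> \<open>P1\<close>
     (\<forall>e\<in>objects G m iv. \<forall>a\<in>D e. al e a = a) \<and>
     R = set_sum (objects G m iv) D \<and>
     \<comment> \<open>P2\<close>
     (\<forall>g\<in>G. \<forall>h\<in>G. gd m iv g = gr m iv h \<longrightarrow>
        {a \<in> D (iv h). al h a \<in> D (iv g) \<inter> D h} \<subseteq> D (iv (m g h))) \<and>
     \<comment> \<open>P3\<close>
     (\<forall>g\<in>G. \<forall>h\<in>G. gd m iv g = gr m iv h \<longrightarrow>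
        (\<forall>a\<in>{a \<in> D (iv h). al h a \<in> D (iv g) \<inter> D h}. al g (al h a) = al (m g h) a))"

definition po_cond ::
  "'g set \<Rightarrow> ('g \<Rightarrow> 'g) \<Rightarrow> ('g \<Rightarrow> 'g \<Rightarrow> bool) \<Rightarrow> ('g \<Rightarrow> 'a set) \<Rightarrow> ('g \<Rightarrow> 'a \<Rightarrow> 'a) \<Rightarrow> bool"
  where
  "po_cond G iv le D al \<longleftrightarrow>
     (\<forall>g\<in>G. \<forall>h\<in>G. le g h \<longrightarrow> D g \<subseteq> D h \<and> (\<forall>a\<in>D (iv g). al g a = al h a))"

definition po_action ::
  "'g set \<Rightarrow> ('g \<Rightarrow> 'g \<Rightarrow> 'g) \<Rightarrow> ('g \<Rightarrow> 'g) \<Rightarrow> ('g \<Rightarrow> 'g \<Rightarrow> bool) \<Rightarrow>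
   'a::ring set \<Rightarrow> ('g \<Rightarrow> 'a set) \<Rightarrow> ('g \<Rightarrow> 'a \<Rightarrow> 'a) \<Rightarrow> bool" where
  "po_action G m iv le R D al \<longleftrightarrow> partial_action G m iv R D al \<and> po_cond G iv le D al"

definition unital ::
  "'g set \<Rightarrow> 'a::ring set \<Rightarrow> ('g \<Rightarrow> 'a set) \<Rightarrow> bool" where
  "unital G R D \<longleftrightarrow>
     (\<forall>g\<in>G. \<exists>u\<in>R. u * u = u \<and> (\<forall>x\<in>R. x * u = u * x) \<and> D g = (\<lambda>x. x * u) ` R)"

definition preunital ::
  "'g set \<Rightarrow> ('g \<Rightarrow> 'g \<Rightarrow> 'g) \<Rightarrow> ('g \<Rightarrow> 'g) \<Rightarrow> 'a::ring set \<Rightarrow> ('g \<Rightarrow> 'a set) \<Rightarrow> bool" where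
  "preunital G m iv R D \<longleftrightarrow>
     (\<forall>e\<in>objects G m iv. \<exists>u\<in>D e. (\<forall>x\<in>D e. u * x = x \<and> x * u = x) \<and>
        u * u = u \<and> (\<forall>x\<in>R. x * u = u * x))"

definition ordered_global_action ::
  "'g set \<Rightarrow> ('g \<Rightarrow> 'g \<Rightarrow> 'g) \<Rightarrow> ('g \<Rightarrow> 'g) \<Rightarrow> ('g \<Rightarrow> 'g \<Rightarrow> bool) \<Rightarrow>
   'b::ring set \<Rightarrow> ('g \<Rightarrow> 'b set) \<Rightarrow> ('g \<Rightarrow> 'b \<Rightarrow> 'b) \<Rightarrow> bool" where
  "ordered_global_action G m iv le S E be \<longleftrightarrow>
     po_action G m iv le S E be \<and> (\<forall>g\<in>G. E g = E (gr m iv g))"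

definition globalization ::
  "'g set \<Rightarrow> ('g \<Rightarrow> 'g \<Rightarrow> 'g) \<Rightarrow> ('g \<Rightarrow> 'g) \<Rightarrow> ('g \<Rightarrow> 'g \<Rightarrow> bool) \<Rightarrow>
   ('g \<Rightarrow> 'a::ring set) \<Rightarrow> ('g \<Rightarrow> 'a \<Rightarrow> 'a) \<Rightarrow>
   'b::ring set \<Rightarrow> ('g \<Rightarrow> 'b set) \<Rightarrow> ('g \<Rightarrow> 'b \<Rightarrow> 'b) \<Rightarrow> ('g \<Rightarrow> 'a \<Rightarrow> 'b) \<Rightarrow> bool" where
  "globalization G m iv le D al S E be ph \<longleftrightarrow>
     ordered_global_action G m iv le S E be \<and>
     (\<forall>e\<in>objects G m iv. inj_on (ph e) (D e) \<and> ring_hom_on (ph e) (D e) \<and>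
        ph e ` D e \<subseteq> E e) \<and>
     \<comment> \<open>(i)\<close>
     (\<forall>e\<in>objects G m iv. is_ideal (ph e ` D e) (E e)) \<and>
     \<comment> \<open>(ii)\<close>
     (\<forall>g\<in>G. ph (gr m iv g) ` D g =
        ph (gr m iv g) ` D (gr m iv g) \<inter> be g ` (ph (gd m iv g) ` D (gd m iv g))) \<and>
     \<comment> \<open>(iii)\<close>
     (\<forall>g\<in>G. \<forall>a\<in>D (iv g). be g (ph (gd m iv g) a) = ph (gr m iv g) (al g a)) \<and>
     \<comment> \<open>(iv)\<close>
     (\<forall>g\<in>G. E g = set_sum {h\<in>G. le (gr m iv h) (gr m iv g)}
                          (\<lambda>h. be h ` (ph (gd m iv h) ` D (gd m iv h))))"

end

theory Submission
  imports Defs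
begin


lemma set_sum_induct:
  assumes "x \<in> set_sum I F" "P 0" "\<And>a b. P a \<Longrightarrow> P b \<Longrightarrow> P (a + b)"
    "\<And>i y. i \<in> I \<Longrightarrow> y \<in> F i \<Longrightarrow> P y"
  shows "P x"
proof -
  obtain S f where x: "x = sum f S" "finite S" "S \<subseteq> I" "\<forall>i\<in>S. f i \<in> F i"
    using assms(1) unfolding set_sum_def by blast
  have "S \<subseteq> I \<longrightarrow> (\<forall>i\<in>S. f i \<in> F i) \<longrightarrow> P (sum f S)" using x(2)
    by (induction S rule: finite_induct) (auto intro: assms(2,3,4))
  then show ?thesis using x by auto
qed

lemma set_sum_in: "i \<in> I \<Longrightarrow> y \<in> F i \<Longrightarrow> y \<in> set_sum I F"
  unfolding set_sum_def by (rule CollectI, rule exI[of _ "{i}"], rule exI[of _ "\<lambda>_. y"]) auto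

lemma set_sum_0: "0 \<in> set_sum I F"
  unfolding set_sum_def by (rule CollectI, rule exI[of _ "{}"]) auto

definition addcl :: "'i set \<Rightarrow> ('i \<Rightarrow> 'a::ab_group_add set) \<Rightarrow> bool" where
  "addcl I F \<longleftrightarrow> (\<forall>i\<in>I. 0 \<in> F i \<and> (\<forall>x\<in>F i. \<forall>y\<in>F i. x + y \<in> F i))"

lemma set_sum_add:
  assumes cl: "addcl I F" and a: "a \<in> set_sum I F" and b: "b \<in> set_sum I F"
  shows "a + b \<in> set_sum I F"
proof -
  obtain S f where x: "a = sum f S" "finite S" "S \<subseteq> I" "\<forall>i\<in>S. f i \<in> F i"
    using a unfolding set_sum_def by blast
  obtain T g where y: "b = sum g T" "finite T" "T \<subseteq> I" "\<forall>i\<in>T. g i \<in> F i"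
    using b unfolding set_sum_def by blast
  define f' where "f' i = (if i \<in> S then f i else 0)" for i
  define g' where "g' i = (if i \<in> T then g i else 0)" for i
  have 1: "sum f S = sum f' (S \<union> T)"
    by (rule sum.mono_neutral_cong_left) (use x y in \<open>auto simp: f'_def\<close>)
  have 2: "sum g T = sum g' (S \<union> T)"
    by (rule sum.mono_neutral_cong_left) (use x y in \<open>auto simp: g'_def\<close>)
  have "a + b = sum (\<lambda>i. f' i + g' i) (S \<union> T)" using 1 2 x y by (simp add: sum.distrib)
  moreover have "\<forall>i\<in>S \<union> T. f' i + g' i \<in> F i"
    using cl x y unfolding addcl_def f'_def g'_def by (auto simp: subset_iff)
  ultimately show ?thesis unfolding set_sum_def using x y by blast
qed

lemma set_sum_subset:
  assumes "x \<in> set_sum I F" "0 \<in> K" "\<And>a b. a \<in> K \<Longrightarrow> b \<in> K \<Longrightarrow> a + b \<in> K"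
    "\<And>i. i \<in> I \<Longrightarrow> F i \<subseteq> K"
  shows "x \<in> K"
  using assms(1) by (rule set_sum_induct) (use assms in auto)

lemma set_sum_mono: "I \<subseteq> J \<Longrightarrow> set_sum I F \<subseteq> set_sum J F"
  unfolding set_sum_def by blast

lemma set_sum_uminus:
  assumes "\<forall>i\<in>I. \<forall>x\<in>F i. - x \<in> F i" "a \<in> set_sum I F"
  shows "- a \<in> set_sum I F"
proof -
  obtain S f where x: "a = sum f S" "finite S" "S \<subseteq> I" "\<forall>i\<in>S. f i \<in> F i"
    using assms unfolding set_sum_def by blast
  have "- a = sum (\<lambda>i. - f i) S" using x by (simp add: sum_negf)
  then show ?thesis unfolding set_sum_def using x assms(1) by blast
qed



locale grpd =
  fixes G :: "'g set" and m :: "'g \<Rightarrow> 'g \<Rightarrow> 'g" and iv :: "'g \<Rightarrow> 'g"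
  assumes grp: "groupoid G m iv"
begin

abbreviation dd where "dd \<equiv> gd m iv"
abbreviation rr where "rr \<equiv> gr m iv"

lemma iv_G[simp]: "g \<in> G \<Longrightarrow> iv g \<in> G"
  using grp unfolding groupoid_def by blast
lemma iv_iv[simp]: "g \<in> G \<Longrightarrow> iv (iv g) = g"
  using grp unfolding groupoid_def by blast
lemma m_G[simp]: "g \<in> G \<Longrightarrow> h \<in> G \<Longrightarrow> dd g = rr h \<Longrightarrow> m g h \<in> G"
  using grp unfolding groupoid_def by blast
lemma d_m[simp]: "g \<in> G \<Longrightarrow> h \<in> G \<Longrightarrow> dd g = rr h \<Longrightarrow> dd (m g h) = dd h"
  using grp unfolding groupoid_def by blast
lemma r_m[simp]: "g \<in> G \<Longrightarrow> h \<in> G \<Longrightarrow> dd g = rr h \<Longrightarrow> rr (m g h) = rr g"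
  using grp unfolding groupoid_def by blast
lemma assoc: "g \<in> G \<Longrightarrow> h \<in> G \<Longrightarrow> k \<in> G \<Longrightarrow> dd g = rr h \<Longrightarrow> dd h = rr k \<Longrightarrow>
    m (m g h) k = m g (m h k)"
  using grp unfolding groupoid_def by blast
lemma unit_l[simp]: "g \<in> G \<Longrightarrow> m (rr g) g = g"
  using grp unfolding groupoid_def by blast
lemma unit_r[simp]: "g \<in> G \<Longrightarrow> m g (dd g) = g"
  using grp unfolding groupoid_def by blast

lemma d_iv[simp]: "g \<in> G \<Longrightarrow> dd (iv g) = rr g"
  by (simp add: gd_def gr_def)
lemma r_iv[simp]: "g \<in> G \<Longrightarrow> rr (iv g) = dd g"
  by (simp add: gd_def gr_def)
lemma m_iv_l: "m (iv g) g = dd g" by (simp add: gd_def)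
lemma m_iv_r: "m g (iv g) = rr g" by (simp add: gr_def)
lemma d_G[simp]: "g \<in> G \<Longrightarrow> dd g \<in> G"
proof -
  assume g: "g \<in> G"
  have "dd g = m (iv g) g" by (rule gd_def)
  also have "\<dots> \<in> G" using g by (intro m_G) simp_all
  finally show ?thesis .
qed
lemma r_G[simp]: "g \<in> G \<Longrightarrow> rr g \<in> G"
proof -
  assume g: "g \<in> G"
  have "dd (iv g) \<in> G" using g by (intro d_G) simp
  thus ?thesis using g by simp
qed
lemma d_d[simp]: "g \<in> G \<Longrightarrow> dd (dd g) = dd g"
proof -
  assume g: "g \<in> G"
  have "dd (dd g) = dd (m (iv g) g)" by (simp only: gd_def[of m iv g])
  also have "\<dots> = dd g" using g by (intro d_m) simp_all
  finally show ?thesis .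
qed
lemma r_d[simp]: "g \<in> G \<Longrightarrow> rr (dd g) = dd g"
proof -
  assume g: "g \<in> G"
  have "rr (dd g) = rr (m (iv g) g)" by (simp only: gd_def[of m iv g])
  also have "\<dots> = rr (iv g)" using g by (intro r_m) simp_all
  finally show ?thesis using g by simp
qed
lemma d_r[simp]: "g \<in> G \<Longrightarrow> dd (rr g) = rr g"
proof -
  assume g: "g \<in> G"
  have "dd (dd (iv g)) = dd (iv g)" using g by (intro d_d) simp
  thus ?thesis using g by simp
qed
lemma r_r[simp]: "g \<in> G \<Longrightarrow> rr (rr g) = rr g"
proof -
  assume g: "g \<in> G"
  have "rr (dd (iv g)) = dd (iv g)" using g by (intro r_d) simp
  thus ?thesis using g by simp
qed
lemma iv_d[simp]: "g \<in> G \<Longrightarrow> iv (dd g) = dd g"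
proof -
  assume g: "g \<in> G"
  let ?e = "dd g"
  have "iv ?e = m (rr (iv ?e)) (iv ?e)" using g unit_l[of "iv ?e"] by simp
  also have "rr (iv ?e) = ?e" using g by simp
  also have "m ?e (iv ?e) = rr ?e" by (rule m_iv_r)
  finally show ?thesis using g by simp
qed
lemma iv_r[simp]: "g \<in> G \<Longrightarrow> iv (rr g) = rr g"
proof -
  assume g: "g \<in> G"
  have "iv (dd (iv g)) = dd (iv g)" using g by (intro iv_d) simp
  thus ?thesis using g by simp
qed
lemma m_dd[simp]: "g \<in> G \<Longrightarrow> m (dd g) (dd g) = dd g"
  using unit_l[of "dd g"] by simp
lemma m_rr[simp]: "g \<in> G \<Longrightarrow> m (rr g) (rr g) = rr g"
  using unit_l[of "rr g"] by simp

lemma objects_iff: "e \<in> objects G m iv \<longleftrightarrow> (\<exists>g\<in>G. e = dd g)"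
  unfolding objects_def by auto
lemma obj_G: "e \<in> objects G m iv \<Longrightarrow> e \<in> G"
  unfolding objects_def by auto
lemma obj_d: "e \<in> objects G m iv \<Longrightarrow> dd e = e"
  unfolding objects_def by auto
lemma obj_r: "e \<in> objects G m iv \<Longrightarrow> rr e = e"
  unfolding objects_def by auto
lemma obj_iv: "e \<in> objects G m iv \<Longrightarrow> iv e = e"
  unfolding objects_def by auto
lemma obj_m: "e \<in> objects G m iv \<Longrightarrow> m e e = e"
  unfolding objects_def by auto
lemma d_obj[simp]: "g \<in> G \<Longrightarrow> dd g \<in> objects G m iv"
  unfolding objects_def by auto
lemma r_obj[simp]: "g \<in> G \<Longrightarrow> rr g \<in> objects G m iv"
  unfolding objects_def using d_iv[of g] iv_G[of g] by (metis image_eqI)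

lemma unit_l2: "g \<in> G \<Longrightarrow> e = rr g \<Longrightarrow> m e g = g" by simp
lemma unit_r2: "g \<in> G \<Longrightarrow> e = dd g \<Longrightarrow> m g e = g" by simp

lemma iv_m: assumes "g \<in> G" "h \<in> G" "dd g = rr h"
  shows "iv (m g h) = m (iv h) (iv g)"
proof -
  let ?p = "m g h" and ?q = "m (iv h) (iv g)"
  have q: "?q \<in> G" "rr ?q = dd h" "dd ?q = rr g" using assms by simp_all
  have p: "?p \<in> G" "rr ?p = rr g" "dd ?p = dd h" using assms by simp_all
  have "m ?p ?q = m g (m h ?q)" using assms q by (simp add: assoc)
  also have "m h ?q = m (m h (iv h)) (iv g)" using assms by (simp add: assoc)
  also have "\<dots> = iv g" using assms unit_l[of "iv g"] by (simp add: m_iv_r)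
  finally have pq: "m ?p ?q = rr ?p" using assms by (simp add: m_iv_r)
  have "iv ?p = m (iv ?p) (rr ?p)" using p by (metis d_iv iv_G unit_r)
  also have "\<dots> = m (iv ?p) (m ?p ?q)" using pq by simp
  also have "\<dots> = m (m (iv ?p) ?p) ?q" using p q by (simp add: assoc)
  also have "\<dots> = ?q" using p q unit_l[of ?q] by (simp add: m_iv_l)
  finally show ?thesis .
qed

end


locale ogrpd = grpd +
  fixes le
  assumes ogrp: "ordered_groupoid G m iv le"
begin

lemmas og = ogrp[unfolded ordered_groupoid_def]
lemmas og_refl = og[THEN conjunct2, THEN conjunct1]
lemmas og_anti = og[THEN conjunct2, THEN conjunct2, THEN conjunct1]
lemmas og_trans = og[THEN conjunct2, THEN conjunct2, THEN conjunct2, THEN conjunct1]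
lemmas og_1 = og[THEN conjunct2, THEN conjunct2, THEN conjunct2, THEN conjunct2, THEN conjunct1]
lemmas og_2 = og[THEN conjunct2, THEN conjunct2, THEN conjunct2, THEN conjunct2, THEN conjunct2, THEN conjunct1]
lemmas og_3 = og[THEN conjunct2, THEN conjunct2, THEN conjunct2, THEN conjunct2, THEN conjunct2, THEN conjunct2, THEN conjunct1]
lemmas og_3s = og[THEN conjunct2, THEN conjunct2, THEN conjunct2, THEN conjunct2, THEN conjunct2, THEN conjunct2, THEN conjunct2]

lemma le_refl[simp]: "g \<in> G \<Longrightarrow> le g g"
  using og_refl by blast
lemma le_antisym: "g \<in> G \<Longrightarrow> h \<in> G \<Longrightarrow> le g h \<Longrightarrow> le h g \<Longrightarrow> g = h"
  using og_anti by blast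
lemma le_trans: "g \<in> G \<Longrightarrow> h \<in> G \<Longrightarrow> k \<in> G \<Longrightarrow> le g h \<Longrightarrow> le h k \<Longrightarrow> le g k"
  using og_trans by blast
lemma le_iv: "g \<in> G \<Longrightarrow> h \<in> G \<Longrightarrow> le g h \<Longrightarrow> le (iv g) (iv h)"
  using og_1 by blast
lemma le_m: "g \<in> G \<Longrightarrow> h \<in> G \<Longrightarrow> k \<in> G \<Longrightarrow> l \<in> G \<Longrightarrow> le g h \<Longrightarrow> le k l \<Longrightarrow>
   dd g = rr k \<Longrightarrow> dd h = rr l \<Longrightarrow> le (m g k) (m h l)"
  using og_2 by blast
lemma exD: "g \<in> G \<Longrightarrow> e \<in> objects G m iv \<Longrightarrow> le e (dd g) \<Longrightarrow> \<exists>k. k \<in> G \<and> le k g \<and> dd k = e"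
  using og_3 by blast
lemma exR: "g \<in> G \<Longrightarrow> e \<in> objects G m iv \<Longrightarrow> le e (rr g) \<Longrightarrow> \<exists>k. k \<in> G \<and> le k g \<and> rr k = e"
  using og_3s by blast
lemma uniqD: assumes "g \<in> G" "k1 \<in> G" "k2 \<in> G" "le k1 g" "le k2 g" "dd k1 = dd k2"
  shows "k1 = k2"
proof -
  have "dd k1 \<in> objects G m iv" using assms by simp
  moreover have "le (dd k1) (dd g)"
    using le_m[of "iv k1" "iv g" k1 g] assms le_iv by (simp add: m_iv_l)
  ultimately have "\<exists>!x. x \<in> G \<and> le x g \<and> dd x = dd k1"
    using og_3 assms(1) by blast
  then obtain x where "\<forall>y. y \<in> G \<and> le y g \<and> dd y = dd k1 \<longrightarrow> y = x" by (elim ex1E) blast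
  then show ?thesis using assms by metis
qed
lemma le_d: "g \<in> G \<Longrightarrow> h \<in> G \<Longrightarrow> le g h \<Longrightarrow> le (dd g) (dd h)"
  using le_m[of "iv g" "iv h" g h] le_iv by (simp add: m_iv_l)
lemma le_r: "g \<in> G \<Longrightarrow> h \<in> G \<Longrightarrow> le g h \<Longrightarrow> le (rr g) (rr h)"
  using le_m[of g h "iv g" "iv h"] le_iv by (simp add: m_iv_r)
lemma uniqR: assumes "g \<in> G" "k1 \<in> G" "k2 \<in> G" "le k1 g" "le k2 g" "rr k1 = rr k2"
  shows "k1 = k2"
proof -
  have "rr k1 \<in> objects G m iv" using assms by simp
  moreover have "le (rr k1) (rr g)" using le_r assms by simp
  ultimately have "\<exists>!x. x \<in> G \<and> le x g \<and> rr x = rr k1"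
    using og_3s assms(1) by blast
  then obtain x where "\<forall>y. y \<in> G \<and> le y g \<and> rr y = rr k1 \<longrightarrow> y = x" by (elim ex1E) blast
  then show ?thesis using assms by metis
qed

definition resR where "resR e g = (THE k. k \<in> G \<and> le k g \<and> rr k = e)"

lemma resR: assumes "g \<in> G" "e \<in> objects G m iv" "le e (rr g)"
  shows "resR e g \<in> G" "le (resR e g) g" "rr (resR e g) = e"
proof -
  obtain k where k: "k \<in> G" "le k g" "rr k = e" using exR assms by blast
  have "resR e g = k" unfolding resR_def
    by (rule the_equality) (use k uniqR assms in auto)
  then show "resR e g \<in> G" "le (resR e g) g" "rr (resR e g) = e" using k by auto
qed

lemma resR_eq: assumes "g \<in> G" "k \<in> G" "le k g" "rr k = e"
  shows "resR e g = k"
  unfolding resR_def by (rule the_equality) (use assms uniqR in auto)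

end


context ogrpd begin

definition sh :: "'a \<Rightarrow> ('a \<Rightarrow> 'b::ring) \<Rightarrow> 'a \<Rightarrow> 'b" where
  "sh g f x = (if x \<in> G \<and> le (rr x) (rr g) then f (m (iv (resR (rr x) g)) x) else 0)"

definition supp :: "('a \<Rightarrow> 'b::ring) \<Rightarrow> 'a \<Rightarrow> bool" where
  "supp f e \<longleftrightarrow> (\<forall>x. f x \<noteq> 0 \<longrightarrow> x \<in> G \<and> le (rr x) e)"

lemma sh_supp: "g \<in> G \<Longrightarrow> supp (sh g f) (rr g)"
  unfolding supp_def sh_def by auto

lemma supp_mono: "supp f e \<Longrightarrow> e \<in> G \<Longrightarrow> e' \<in> G \<Longrightarrow> le e e' \<Longrightarrow> supp f e'"
  unfolding supp_def by (meson le_trans r_G)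

lemma supp_add: "supp f e \<Longrightarrow> supp f' e \<Longrightarrow> supp (f + f') e"
  unfolding supp_def by (metis add.left_neutral plus_fun_apply)
lemma supp_0: "supp 0 e"
  unfolding supp_def by auto

lemma sh_add: "sh g (f + f') = sh g f + sh g f'"
  unfolding sh_def by (rule ext) auto
lemma sh_mult: "sh g (f * f') = sh g f * sh g f'"
  unfolding sh_def by (rule ext) auto
lemma sh_0: "sh g 0 = 0"
  unfolding sh_def by (rule ext) auto
lemma sh_uminus: "sh g (- f) = - sh g f"
  unfolding sh_def by (rule ext) auto
lemma sh_sum: "sh g (sum F S) = sum (\<lambda>i. sh g (F i)) S"
proof (induction S rule: infinite_finite_induct)
  case (infinite A)
  then show ?case by (metis sh_0 sum.infinite)
next
  case empty
  then show ?case by (metis sh_0 sum.empty)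
next
  case (insert x S')
  then show ?case by (metis sh_add sum.insert)
qed

lemma sh_comp:
  assumes g: "g \<in> G" and h: "h \<in> G" and gh: "dd g = rr h" and f: "supp f (dd h)"
  shows "sh g (sh h f) = sh (m g h) f"
proof (rule ext)
  fix x
  show "sh g (sh h f) x = sh (m g h) f x"
  proof (cases "x \<in> G \<and> le (rr x) (rr g)")
    case True
    define k where "k = resR (rr x) g"
    have k: "k \<in> G" "le k g" "rr k = rr x" using resR[of g "rr x"] True g unfolding k_def by auto
    define y where "y = m (iv k) x"
    have y: "y \<in> G" "rr y = dd k" unfolding y_def using k True by simp_all
    have ldk: "le (dd k) (rr h)" using le_d[OF k(1) g k(2)] gh by simp
    define k' where "k' = resR (dd k) h"
    have k': "k' \<in> G" "le k' h" "rr k' = dd k" using resR[of h "dd k"] ldk h k unfolding k'_def by auto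
    have kk: "m k k' \<in> G" "le (m k k') (m g h)" "rr (m k k') = rr x"
      using k k' g h gh le_m[of k g k' h] by simp_all
    have eq: "resR (rr x) (m g h) = m k k'"
      by (rule resR_eq) (use kk g h gh in auto)
    have "sh g (sh h f) x = sh h f y" unfolding sh_def y_def k_def using True by simp
    also have "\<dots> = f (m (iv k') y)" unfolding sh_def k'_def using y ldk by simp
    also have "m (iv k') y = m (iv (m k k')) x"
    proof -
      have "iv (m k k') = m (iv k') (iv k)" using k k' by (simp add: iv_m)
      moreover have "m (m (iv k') (iv k)) x = m (iv k') (m (iv k) x)"
        by (rule assoc) (use k k' True in simp_all)
      ultimately show ?thesis unfolding y_def by simp
    qed
    also have "f \<dots> = sh (m g h) f x" unfolding sh_def using True g h gh eq by simp
    finally show ?thesis .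
  next
    case False
    then show ?thesis unfolding sh_def using g h gh by auto
  qed
qed

lemma sh_le:
  assumes k: "k \<in> G" and g: "g \<in> G" and kg: "le k g" and f: "supp f (dd k)"
  shows "sh k f = sh g f"
proof (rule ext)
  fix x
  have rkg: "le (rr k) (rr g)" using le_r k g kg by simp
  show "sh k f x = sh g f x"
  proof (cases "x \<in> G \<and> le (rr x) (rr k)")
    case True
    then have T2: "le (rr x) (rr g)" using rkg le_trans[of "rr x" "rr k" "rr g"] k g by auto
    define k1 where "k1 = resR (rr x) k"
    have k1: "k1 \<in> G" "le k1 k" "rr k1 = rr x" using resR[of k "rr x"] True k unfolding k1_def by auto
    have "le k1 g" using le_trans[of k1 k g] k1 k g kg by simp
    then have "resR (rr x) g = k1" by (intro resR_eq) (use k1 g in auto)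
    then show ?thesis unfolding sh_def using True T2 k1_def by simp
  next
    case False
    show ?thesis
    proof (cases "x \<in> G \<and> le (rr x) (rr g)")
      case True
      define k2 where "k2 = resR (rr x) g"
      have k2: "k2 \<in> G" "le k2 g" "rr k2 = rr x" using resR[of g "rr x"] True g unfolding k2_def by auto
      have "f (m (iv k2) x) = 0"
      proof (rule ccontr)
        assume "f (m (iv k2) x) \<noteq> 0"
        then have "le (rr (m (iv k2) x)) (dd k)" using f unfolding supp_def by blast
        then have l: "le (dd k2) (dd k)" using k2 True by simp
        obtain k3 where k3: "k3 \<in> G" "le k3 k" "dd k3 = dd k2" using exD[of k "dd k2"] l k k2 by auto
        have "le k3 g" using le_trans[of k3 k g] k3 k g kg by simp
        have "k3 = k2" by (rule uniqD[of g]) (use k3 k2 g \<open>le k3 g\<close> in auto)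
        then have "le (rr k2) (rr k)" using le_r k3 k by auto
        then show False using False k2 True by simp
      qed
      then show ?thesis unfolding sh_def using False True k2_def by simp
    next
      case False
      then show ?thesis unfolding sh_def using \<open>\<not> (x \<in> G \<and> le (rr x) (rr k))\<close> by auto
    qed
  qed
qed

lemma sh_obj:
  assumes e: "e \<in> objects G m iv" and f: "supp f e"
  shows "sh e f = f"
proof (rule ext)
  fix x
  show "sh e f x = f x"
  proof (cases "x \<in> G \<and> le (rr x) e")
    case True
    have "resR (rr x) e = rr x" by (rule resR_eq) (use True e obj_G in auto)
    then show ?thesis unfolding sh_def using True e by (simp add: obj_r)
  next
    case False
    then show ?thesis using f e unfolding sh_def supp_def by (auto simp: obj_r)
  qed
qed

end


locale gpa = ogrpd +
  fixes D :: "'a \<Rightarrow> 'b::ring set" and al :: "'a \<Rightarrow> 'b \<Rightarrow> 'b"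
  assumes poa: "po_action G m iv le (UNIV :: 'b set) D al"
    and uni: "unital G (UNIV :: 'b set) D"
begin

lemmas pa = poa[unfolded po_action_def partial_action_def, THEN conjunct1]
lemmas pa_ideal_obj = pa[THEN conjunct2, THEN conjunct1]
lemmas pa_ideal = pa[THEN conjunct2, THEN conjunct2, THEN conjunct1]
lemmas pa_iso = pa[THEN conjunct2, THEN conjunct2, THEN conjunct2, THEN conjunct1]
lemmas pa_id = pa[THEN conjunct2, THEN conjunct2, THEN conjunct2, THEN conjunct2, THEN conjunct1]
lemmas pa_P2 = pa[THEN conjunct2, THEN conjunct2, THEN conjunct2, THEN conjunct2, THEN conjunct2, THEN conjunct2, THEN conjunct1]
lemmas pa_P3 = pa[THEN conjunct2, THEN conjunct2, THEN conjunct2, THEN conjunct2, THEN conjunct2, THEN conjunct2, THEN conjunct2]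

definition u where
  "u g = (SOME v. v * v = v \<and> (\<forall>x. x * v = v * x) \<and> D g = range (\<lambda>x. x * v))"

lemma u_props: assumes "g \<in> G"
  shows "u g * u g = u g" "\<And>x. x * u g = u g * x" "D g = range (\<lambda>x. x * u g)"
proof -
  have "\<exists>v. v * v = v \<and> (\<forall>x. x * v = v * x) \<and> D g = range (\<lambda>x. x * v)"
    using bspec[OF uni[unfolded unital_def] assms] by simp
  then have "u g * u g = u g \<and> (\<forall>x. x * u g = u g * x) \<and> D g = range (\<lambda>x. x * u g)"
    unfolding u_def by (rule someI_ex)
  then show "u g * u g = u g" "\<And>x. x * u g = u g * x" "D g = range (\<lambda>x. x * u g)" by blast+
qed

lemma u_in: "g \<in> G \<Longrightarrow> u g \<in> D g"
  using u_props[of g] by (metis rangeI)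

lemma D_unit: assumes "g \<in> G" "x \<in> D g" shows "x * u g = x" "u g * x = x"
proof -
  obtain y where y: "x = y * u g" using assms u_props(3) by blast
  show "x * u g = x" using y u_props(1)[OF assms(1)] by (simp add: mult.assoc)
  then show "u g * x = x" using u_props(2)[OF assms(1)] by metis
qed

lemma D_mult: assumes "g \<in> G" "x \<in> D g" shows "y * x \<in> D g" "x * y \<in> D g"
proof -
  have "y * x = (y * x) * u g" using D_unit[OF assms] by (simp add: mult.assoc)
  then show "y * x \<in> D g" using u_props(3)[OF assms(1)] by (metis rangeI)
  have "x * y = (x * y) * u g" using D_unit[OF assms] u_props(2)[OF assms(1)]
    by (metis mult.assoc)
  then show "x * y \<in> D g" using u_props(3)[OF assms(1)] by (metis rangeI)
qed

lemma D_sub: "g \<in> G \<Longrightarrow> D g \<subseteq> D (rr g)"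
  using pa_ideal unfolding is_ideal_def by blast
lemma D_0: "g \<in> G \<Longrightarrow> 0 \<in> D g"
  using pa_ideal unfolding is_ideal_def by blast
lemma D_add: "g \<in> G \<Longrightarrow> x \<in> D g \<Longrightarrow> y \<in> D g \<Longrightarrow> x + y \<in> D g"
  using pa_ideal unfolding is_ideal_def by blast
lemma D_neg: "g \<in> G \<Longrightarrow> x \<in> D g \<Longrightarrow> - x \<in> D g"
  using pa_ideal unfolding is_ideal_def by blast
lemma D_sub_d: "g \<in> G \<Longrightarrow> D (iv g) \<subseteq> D (dd g)"
  using D_sub[of "iv g"] by simp

lemma al_bij: "g \<in> G \<Longrightarrow> bij_betw (al g) (D (iv g)) (D g)"
  using pa_iso unfolding ring_iso_def by blast
lemma al_in: "g \<in> G \<Longrightarrow> a \<in> D (iv g) \<Longrightarrow> al g a \<in> D g"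
  using al_bij bij_betwE by blast
lemma al_add: "g \<in> G \<Longrightarrow> a \<in> D (iv g) \<Longrightarrow> b \<in> D (iv g) \<Longrightarrow> al g (a + b) = al g a + al g b"
  using pa_iso unfolding ring_iso_def ring_hom_on_def by blast
lemma al_mult: "g \<in> G \<Longrightarrow> a \<in> D (iv g) \<Longrightarrow> b \<in> D (iv g) \<Longrightarrow> al g (a * b) = al g a * al g b"
  using pa_iso unfolding ring_iso_def ring_hom_on_def by blast
lemma al_0: "g \<in> G \<Longrightarrow> al g 0 = 0"
  using al_add[of g 0 0] D_0[of "iv g"] by simp
lemma al_id: "e \<in> objects G m iv \<Longrightarrow> a \<in> D e \<Longrightarrow> al e a = a"
  using pa_id by blast

lemma al_inv: assumes g: "g \<in> G" and a: "a \<in> D (iv g)" shows "al (iv g) (al g a) = a"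
proof -
  have "dd (iv g) = rr g" using g by simp
  moreover have "a \<in> {a \<in> D (iv g). al g a \<in> D (iv (iv g)) \<inter> D g}" using a al_in g by simp
  ultimately have "al (iv g) (al g a) = al (m (iv g) g) a" using pa_P3 g by simp
  also have "\<dots> = al (dd g) a" by (simp add: m_iv_l)
  also have "\<dots> = a" using al_id[of "dd g" a] D_sub_d[OF g] a g by auto
  finally show ?thesis .
qed

lemma al_inv': assumes g: "g \<in> G" and a: "a \<in> D g" shows "al g (al (iv g) a) = a"
  using al_inv[of "iv g" a] g a by simp

lemma al_A4: assumes g: "g \<in> G" and l: "l \<in> G" and gl: "dd g = rr l"
  and a1: "a \<in> D (iv g)" and a2: "a \<in> D l"
  shows "al g a \<in> D (m g l)"
proof -
  have c: "dd (iv l) = rr (iv g)" using g l gl by simp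
  have "al g a \<in> {a' \<in> D (iv (iv g)). al (iv g) a' \<in> D (iv (iv l)) \<inter> D (iv g)}"
    using g l al_in a1 a2 al_inv by simp
  moreover have "{a' \<in> D (iv (iv g)). al (iv g) a' \<in> D (iv (iv l)) \<inter> D (iv g)} \<subseteq> D (iv (m (iv l) (iv g)))"
    by (rule pa_P2[rule_format]) (use c g l in simp_all)
  ultimately have "al g a \<in> D (iv (m (iv l) (iv g)))" by blast
  also have "iv (m (iv l) (iv g)) = m g l" using iv_m[of "iv l" "iv g"] c g l by simp
  finally show ?thesis .
qed

lemma L1: assumes g: "g \<in> G" and l: "l \<in> G" and gl: "dd g = rr l" and a: "a \<in> D (iv g)"
  shows "al g (a * u l) = al g a * u (m g l)"
proof -
  let ?gl = "m g l"
  have glG: "?gl \<in> G" using g l gl by simp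
  define e1 where "e1 = u (iv g) * u l"
  define e2 where "e2 = u g * u ?gl"
  have e1D: "e1 \<in> D (iv g)" "e1 \<in> D l" unfolding e1_def
    using D_mult u_in g l by (simp_all add: u_props(2)[of l])
  have ae1: "al g e1 \<in> D g" "al g e1 \<in> D ?gl" using al_in al_A4 e1D g l gl by auto
  have e2D: "e2 \<in> D g" "e2 \<in> D ?gl" unfolding e2_def
    using D_mult u_in g glG by (simp_all add: u_props(2)[of ?gl])
  have unitJ: "al g e1 * y = y" if y: "y \<in> D g" "y \<in> D ?gl" for y
  proof -
    define z where "z = al (iv g) y"
    have z1: "z \<in> D (iv g)" unfolding z_def using al_in[of "iv g" y] g y by simp
    have "z \<in> D (m (iv g) ?gl)" unfolding z_def
      by (rule al_A4) (use g glG gl y l in simp_all)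
    moreover have "m (iv g) ?gl = l"
      using assoc[of "iv g" g l] g l gl by (simp add: m_iv_l)
    ultimately have z2: "z \<in> D l" by simp
    have "e1 * z = z" unfolding e1_def using D_unit z1 z2 g l by (simp add: mult.assoc)
    then have "al g e1 * al g z = al g z" using al_mult[of g e1 z] e1D z1 g by simp
    moreover have "al g z = y" unfolding z_def using al_inv' g y by simp
    ultimately show ?thesis by simp
  qed
  have "al g e1 = e2"
  proof -
    have "al g e1 * e2 = e2" using unitJ e2D by simp
    moreover have "al g e1 * e2 = al g e1" unfolding e2_def
      using D_unit ae1 g glG by (simp add: mult.assoc[symmetric])
    ultimately show ?thesis by simp
  qed
  have "a * u l = a * e1" unfolding e1_def using D_unit a g by (simp add: mult.assoc[symmetric])
  then have "al g (a * u l) = al g a * al g e1" using al_mult e1D a g by simp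
  also have "\<dots> = al g a * u g * u ?gl" using \<open>al g e1 = e2\<close> e2_def by (simp add: mult.assoc)
  also have "al g a * u g = al g a" using D_unit al_in a g by simp
  finally show ?thesis .
qed

end


context grpd begin
lemma chain: assumes "h \<in> G" "h' \<in> G" "x \<in> G" "rr h = rr x" "rr h' = rr x"
  shows "m (m (iv h') h) (m (iv h) x) = m (iv h') x"
proof -
  have "m (m (iv h') h) (m (iv h) x) = m (iv h') (m h (m (iv h) x))"
    by (rule assoc) (use assms in simp_all)
  also have "m h (m (iv h) x) = m (m h (iv h)) x"
    by (rule assoc[symmetric]) (use assms in simp_all)
  also have "\<dots> = x" using assms unit_l[of x] by (simp add: m_iv_r)
  finally show ?thesis .
qed
lemma iv_chain: assumes "h \<in> G" "h' \<in> G" "rr h = rr h'"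
  shows "iv (m (iv h') h) = m (iv h) h'"
  using iv_m[of "iv h'" h] assms by simp
end

context gpa begin

definition ph :: "'a \<Rightarrow> 'b \<Rightarrow> 'a \<Rightarrow> 'b" where
  "ph e a x = (if x \<in> G \<and> rr x = e then al (iv x) (a * u x) else 0)"

lemma IDENT: assumes x: "x \<in> G" and g: "g \<in> G" and xg: "rr x = rr g" and a: "a \<in> D (iv g)"
  shows "al (iv x) (al g a * u x) = al (iv (m (iv g) x)) (a * u (m (iv g) x))"
proof -
  define l where "l = m (iv g) x"
  have l: "l \<in> G" "rr l = dd g" "dd l = dd x" unfolding l_def using x g xg by simp_all
  have gl: "m g l = x" unfolding l_def
    using assoc[of g "iv g" x] x g xg unit_l[of x] by (simp add: m_iv_r)
  have L: "al g (a * u l) = al g a * u x" using L1[of g l a] g l a gl by simp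
  have y: "a * u l \<in> D (iv g)" using D_mult a g by simp
  have "al g a * u x \<in> D g" using D_mult(2) al_in g a by blast
  moreover have "al g a * u x \<in> D x" using D_mult(1)[OF x u_in[OF x]] by blast
  ultimately have "al g (a * u l) \<in> D (iv (iv x)) \<inter> D g" using L x by simp
  then have "a * u l \<in> {a \<in> D (iv g). al g a \<in> D (iv (iv x)) \<inter> D g}" using y by simp
  moreover have "dd (iv x) = rr g" using x xg by simp
  ultimately have "al (iv x) (al g (a * u l)) = al (m (iv x) g) (a * u l)"
    using pa_P3 x g by simp
  moreover have "m (iv x) g = iv l" unfolding l_def using iv_m[of "iv g" x] x g xg by simp
  ultimately show ?thesis using L l_def by simp
qed

definition gfun :: "'a \<Rightarrow> 'b \<Rightarrow> 'a \<Rightarrow> 'b" where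
  "gfun h b x = (if x \<in> G \<and> rr x = rr h then al (iv (m (iv h) x)) (b * u (m (iv h) x)) else 0)"

lemma gen_eq: assumes h: "h \<in> G" shows "sh h (ph (dd h) b) = gfun h b"
proof (rule ext)
  fix x
  show "sh h (ph (dd h) b) x = gfun h b x"
  proof (cases "x \<in> G \<and> le (rr x) (rr h)")
    case True
    define k where "k = resR (rr x) h"
    have k: "k \<in> G" "le k h" "rr k = rr x" using resR[of h "rr x"] True h unfolding k_def by auto
    have y: "m (iv k) x \<in> G" "rr (m (iv k) x) = dd k" using k True by simp_all
    show ?thesis
    proof (cases "rr x = rr h")
      case True2: True
      have "k = h" unfolding k_def by (rule resR_eq) (use h True2 in simp_all)
      then show ?thesis unfolding sh_def ph_def gfun_def using True True2 y k_def by simp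
    next
      case False
      have "k \<noteq> h" using k False by auto
      then have "dd k \<noteq> dd h" using uniqD[of h k h] k h by auto
      then show ?thesis unfolding sh_def ph_def gfun_def using True False y k_def by simp
    qed
  next
    case False
    then have F2: "\<not> (x \<in> G \<and> rr x = rr h)" using h by auto
    show ?thesis unfolding sh_def gfun_def if_not_P[OF False] if_not_P[OF F2] ..
  qed
qed

lemma SWAP: assumes h: "h \<in> G" and h': "h' \<in> G" and hh: "rr h = rr h'" and x: "x \<in> G"
  and xh: "rr x = rr h" and b: "b \<in> D (dd h)"
  shows "al (iv (m (iv h) x)) (b * u (m (iv h) x)) * u (iv (m (iv h') x)) =
         al (iv (m (iv h') x)) (al (m (iv h') h) (b * u (iv (m (iv h') h))) * u (m (iv h') x))"
proof -
  define y where "y = m (iv h) x"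
  define y' where "y' = m (iv h') x"
  define k where "k = m (iv h') h"
  have yG: "y \<in> G" "rr y = dd h" unfolding y_def using h x xh by simp_all
  have y'G: "y' \<in> G" "rr y' = dd h'" unfolding y'_def using h' x xh hh by simp_all
  have kG: "k \<in> G" "rr k = dd h'" "dd k = dd h" unfolding k_def using h h' hh by simp_all
  have ky: "m k y = y'" unfolding k_def y_def y'_def
    by (rule chain) (use h h' x in \<open>simp_all add: xh hh\<close>)
  have ivk: "iv k = m (iv h) h'" unfolding k_def by (rule iv_chain) (use h h' hh in simp_all)
  have iky: "m (iv k) y' = y" unfolding ivk y_def y'_def
    by (rule chain) (use h h' x in \<open>simp_all add: xh hh\<close>)
  have byD: "b * u y \<in> D (iv (iv y))" using D_mult u_in yG by simp
  have "al (iv y) (b * u y * u (iv k)) = al (iv y) (b * u y) * u (m (iv y) (iv k))"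
    by (rule L1) (use yG kG byD in simp_all)
  moreover have "m (iv y) (iv k) = iv y'" using iv_m[of k y] ky kG yG by simp
  moreover have "b * u y * u (iv k) = (b * u (iv k)) * u y"
    by (metis mult.assoc u_props(2) yG(1))
  ultimately have 1: "al (iv y) (b * u y) * u (iv y') = al (iv y) ((b * u (iv k)) * u y)" by simp
  have bk: "b * u (iv k) \<in> D (iv k)" using D_mult u_in kG by simp
  have "al (iv y') (al k (b * u (iv k)) * u y') = al (iv (m (iv k) y')) ((b * u (iv k)) * u (m (iv k) y'))"
    by (rule IDENT) (use y'G kG bk in simp_all)
  then show ?thesis using 1 iky unfolding y_def[symmetric] y'_def[symmetric] k_def[symmetric] by simp
qed

end


lemma cidem: fixes b c v :: "'b::ring"
  assumes "v * v = v" "\<And>x. x * v = v * x" shows "b * v * (c * v) = b * c * v"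
proof -
  have "b * v * (c * v) = b * (v * c) * v" by (simp add: mult.assoc)
  also have "\<dots> = b * (c * v) * v" using assms(2)[of c] by simp
  also have "\<dots> = b * c * (v * v)" by (simp add: mult.assoc)
  finally show ?thesis using assms(1) by simp
qed

context gpa begin

lemma gfun_supp: "h \<in> G \<Longrightarrow> supp (gfun h b) (rr h)"
  unfolding supp_def gfun_def by auto

lemma yD: assumes "h \<in> G" "x \<in> G" "rr x = rr h" "b \<in> D (dd h)"
  shows "b * u (m (iv h) x) \<in> D (iv (iv (m (iv h) x)))"
  using assms D_mult u_in by simp

lemma gfun_add: assumes h: "h \<in> G" and b: "b \<in> D (dd h)" and b': "b' \<in> D (dd h)"
  shows "gfun h (b + b') = gfun h b + gfun h b'"
proof (rule ext)
  fix x
  show "gfun h (b + b') x = (gfun h b + gfun h b') x"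
  proof (cases "x \<in> G \<and> rr x = rr h")
    case True
    let ?y = "m (iv h) x"
    have "(b + b') * u ?y = b * u ?y + b' * u ?y" by (simp add: distrib_right)
    moreover have "al (iv ?y) (b * u ?y + b' * u ?y) = al (iv ?y) (b * u ?y) + al (iv ?y) (b' * u ?y)"
      by (rule al_add) (use True h yD[OF h _ _ b] yD[OF h _ _ b'] in simp_all)
    ultimately show ?thesis unfolding gfun_def using True by simp
  next
    case False
    show ?thesis unfolding gfun_def plus_fun_def if_not_P[OF False] by simp
  qed
qed

lemma gfun_0: assumes h: "h \<in> G" shows "gfun h 0 = 0"
  unfolding gfun_def using h al_0 by (intro ext) simp

lemma gfun_neg: assumes h: "h \<in> G" and b: "b \<in> D (dd h)"
  shows "gfun h (- b) = - gfun h b"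
proof -
  have "gfun h (- b) + gfun h b = gfun h (- b + b)"
    using gfun_add[of h "- b" b] h b D_neg by simp
  also have "\<dots> = 0" using gfun_0 h by simp
  finally show ?thesis by (simp add: add_eq_0_iff2)
qed

lemma ZERO: assumes "rr h \<noteq> rr h'" shows "gfun h b * gfun h' b' = 0"
  unfolding gfun_def using assms by (intro ext) auto

lemma PROD: assumes h: "h \<in> G" and h': "h' \<in> G" and hh: "rr h = rr h'"
  and b: "b \<in> D (dd h)" and b': "b' \<in> D (dd h')"
  shows "gfun h b * gfun h' b' = gfun h (b * al (m (iv h) h') (b' * u (iv (m (iv h) h'))))"
proof (rule ext)
  fix x
  define c where "c = al (m (iv h) h') (b' * u (iv (m (iv h) h')))"
  show "(gfun h b * gfun h' b') x = gfun h (b * al (m (iv h) h') (b' * u (iv (m (iv h) h')))) x"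
  proof (cases "x \<in> G \<and> rr x = rr h")
    case True
    define y where "y = m (iv h) x"
    define y' where "y' = m (iv h') x"
    have yG: "y \<in> G" unfolding y_def using h True by simp
    let ?F1 = "al (iv y) (b * u y)"
    let ?F2 = "al (iv y') (b' * u y')"
    have F1: "?F1 \<in> D (iv y)" using al_in[of "iv y"] yD[OF h _ _ b] True yG h unfolding y_def by simp
    have "?F1 * ?F2 = ?F1 * u (iv y) * ?F2" using D_unit F1 yG by simp
    also have "\<dots> = ?F1 * (u (iv y) * ?F2)" by (simp only: mult.assoc)
    also have "u (iv y) * ?F2 = ?F2 * u (iv y)" using u_props(2)[of "iv y" ?F2] yG by simp
    also have "?F2 * u (iv y) = al (iv y) (c * u y)" unfolding y_def y'_def c_def
      by (rule SWAP) (use h h' hh True b' in simp_all)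
    also have "?F1 * al (iv y) (c * u y) = al (iv y) (b * u y * (c * u y))"
    proof (rule al_mult[symmetric])
      show "iv y \<in> G" using yG by simp
      show "b * u y \<in> D (iv (iv y))" using D_mult u_in yG by simp
      show "c * u y \<in> D (iv (iv y))" using D_mult u_in yG by simp
    qed
    also have "b * u y * (c * u y) = b * c * u y" by (rule cidem[OF u_props(1)[OF yG] u_props(2)[OF yG]])
    finally show ?thesis unfolding gfun_def y_def y'_def using True hh c_def by simp
  next
    case False
    have F2: "\<not> (x \<in> G \<and> rr x = rr h')" using False hh by simp
    show ?thesis unfolding gfun_def times_fun_def if_not_P[OF False] if_not_P[OF F2] by simp
  qed
qed

lemma PROD': assumes h: "h \<in> G" and h': "h' \<in> G" and hh: "rr h = rr h'"
  and b: "b \<in> D (dd h)" and b': "b' \<in> D (dd h')"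
  shows "gfun h b * gfun h' b' = gfun h' (al (m (iv h') h) (b * u (iv (m (iv h') h))) * b')"
proof (rule ext)
  fix x
  define c where "c = al (m (iv h') h) (b * u (iv (m (iv h') h)))"
  show "(gfun h b * gfun h' b') x = gfun h' (al (m (iv h') h) (b * u (iv (m (iv h') h))) * b') x"
  proof (cases "x \<in> G \<and> rr x = rr h")
    case True
    define y where "y = m (iv h) x"
    define y' where "y' = m (iv h') x"
    have y'G: "y' \<in> G" unfolding y'_def using h' True hh by simp
    let ?F1 = "al (iv y) (b * u y)"
    let ?F2 = "al (iv y') (b' * u y')"
    have F2: "?F2 \<in> D (iv y')" using al_in[of "iv y'"] yD[OF h' _ _ b'] True hh y'G h' unfolding y'_def by simp
    have "?F1 * ?F2 = ?F1 * (u (iv y') * ?F2)" using D_unit F2 y'G by simp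
    also have "\<dots> = (?F1 * u (iv y')) * ?F2" by (simp add: mult.assoc)
    also have "?F1 * u (iv y') = al (iv y') (c * u y')" unfolding y_def y'_def c_def
      by (rule SWAP) (use h h' hh True b in simp_all)
    also have "al (iv y') (c * u y') * ?F2 = al (iv y') (c * u y' * (b' * u y'))"
    proof (rule al_mult[symmetric])
      show "iv y' \<in> G" using y'G by simp
      show "c * u y' \<in> D (iv (iv y'))" using D_mult u_in y'G by simp
      show "b' * u y' \<in> D (iv (iv y'))" using D_mult u_in y'G by simp
    qed
    also have "c * u y' * (b' * u y') = c * b' * u y'" by (rule cidem[OF u_props(1)[OF y'G] u_props(2)[OF y'G]])
    finally show ?thesis unfolding gfun_def y_def y'_def using True hh c_def by simp
  next
    case False
    then show ?thesis unfolding gfun_def using hh by auto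
  qed
qed

lemma c_in: assumes h: "h \<in> G" and h': "h' \<in> G" and hh: "rr h = rr h'" and b': "b' \<in> D (dd h')"
  shows "al (m (iv h) h') (b' * u (iv (m (iv h) h'))) \<in> D (dd h)"
proof -
  let ?k = "m (iv h) h'"
  have k: "?k \<in> G" "rr ?k = dd h" using h h' hh by simp_all
  have "al ?k (b' * u (iv ?k)) \<in> D ?k" using al_in D_mult u_in k by simp
  moreover have "D ?k \<subseteq> D (dd h)" using D_sub[OF k(1)] k(2) by simp
  ultimately show ?thesis by blast
qed

end


context gpa begin

definition Gen :: "'a \<Rightarrow> ('a \<Rightarrow> 'b) set" where
  "Gen h = sh h ` (ph (dd h) ` D (dd h))"
definition E :: "'a \<Rightarrow> ('a \<Rightarrow> 'b) set" where
  "E g = set_sum {h \<in> G. le (rr h) (rr g)} Gen"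
definition S :: "('a \<Rightarrow> 'b) set" where
  "S = set_sum (objects G m iv) E"

lemma Gen_eq: "h \<in> G \<Longrightarrow> Gen h = gfun h ` D (dd h)"
  unfolding Gen_def image_image using gen_eq by simp

lemma Gen_0: "h \<in> G \<Longrightarrow> 0 \<in> Gen h"
  using Gen_eq gfun_0 D_0 by (metis d_G image_eqI)
lemma Gen_add: "h \<in> G \<Longrightarrow> x \<in> Gen h \<Longrightarrow> y \<in> Gen h \<Longrightarrow> x + y \<in> Gen h"
  using Gen_eq gfun_add D_add by (smt (verit) d_G image_iff)
lemma Gen_neg: "h \<in> G \<Longrightarrow> x \<in> Gen h \<Longrightarrow> - x \<in> Gen h"
  using Gen_eq gfun_neg D_neg by (smt (verit) d_G image_iff)

lemma Gen_addcl: "addcl {h \<in> G. le (rr h) (rr g)} Gen"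
  unfolding addcl_def using Gen_0 Gen_add by auto

lemma E_0: "0 \<in> E g" unfolding E_def by (rule set_sum_0)
lemma E_add: "x \<in> E g \<Longrightarrow> y \<in> E g \<Longrightarrow> x + y \<in> E g"
  unfolding E_def by (rule set_sum_add[OF Gen_addcl])
lemma E_neg: "x \<in> E g \<Longrightarrow> - x \<in> E g"
  unfolding E_def by (rule set_sum_uminus) (use Gen_neg in auto)
lemma E_gen: "h \<in> G \<Longrightarrow> le (rr h) (rr g) \<Longrightarrow> b \<in> D (dd h) \<Longrightarrow> gfun h b \<in> E g"
  unfolding E_def by (rule set_sum_in[of h]) (use Gen_eq in auto)
lemma E_rr: "rr a = rr b \<Longrightarrow> E a = E b"
  unfolding E_def by simp

lemma E_induct: assumes "x \<in> E g" "P 0" "\<And>a b. P a \<Longrightarrow> P b \<Longrightarrow> P (a + b)"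
  "\<And>h b. h \<in> G \<Longrightarrow> le (rr h) (rr g) \<Longrightarrow> b \<in> D (dd h) \<Longrightarrow> P (gfun h b)"
  shows "P x"
proof -
  have "x \<in> set_sum {h \<in> G. le (rr h) (rr g)} Gen" using assms(1) unfolding E_def .
  then show ?thesis
  proof (rule set_sum_induct)
    show "P 0" by (rule assms(2))
    fix a b assume "P a" "P b" then show "P (a + b)" by (rule assms(3))
  next
    fix i y assume i: "i \<in> {h \<in> G. le (rr h) (rr g)}" and y: "y \<in> Gen i"
    then obtain b where "b \<in> D (dd i)" "y = gfun i b" using Gen_eq by auto
    then show "P y" using assms(4) i by blast
  qed
qed

lemma E_supp: assumes g: "g \<in> G" and x: "x \<in> E g" shows "supp x (rr g)"
  using x
proof (rule E_induct)
  show "supp 0 (rr g)" by (rule supp_0)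
  show "\<And>a b. supp a (rr g) \<Longrightarrow> supp b (rr g) \<Longrightarrow> supp (a + b) (rr g)" by (rule supp_add)
  fix h b assume "h \<in> G" "le (rr h) (rr g)"
  then show "supp (gfun h b) (rr g)" by (intro supp_mono[OF gfun_supp]) (use g in simp_all)
qed

lemma gen_mult: assumes h: "h \<in> G" and b: "b \<in> D (dd h)" and f: "f \<in> E g"
  shows "gfun h b * f \<in> E g \<and> f * gfun h b \<in> E g"
  using f
proof (rule E_induct)
  show "gfun h b * 0 \<in> E g \<and> 0 * gfun h b \<in> E g" using E_0 by simp
next
  fix a c assume "gfun h b * a \<in> E g \<and> a * gfun h b \<in> E g" "gfun h b * c \<in> E g \<and> c * gfun h b \<in> E g"
  then show "gfun h b * (a + c) \<in> E g \<and> (a + c) * gfun h b \<in> E g"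
    using E_add by (simp add: distrib_left distrib_right)
next
  fix h' b' assume h': "h' \<in> G" "le (rr h') (rr g)" and b': "b' \<in> D (dd h')"
  show "gfun h b * gfun h' b' \<in> E g \<and> gfun h' b' * gfun h b \<in> E g"
  proof (cases "rr h = rr h'")
    case True
    have 1: "gfun h b * gfun h' b' = gfun h' (al (m (iv h') h) (b * u (iv (m (iv h') h))) * b')"
      by (rule PROD') (use h h' True b b' in auto)
    have 2: "gfun h' b' * gfun h b = gfun h' (b' * al (m (iv h') h) (b * u (iv (m (iv h') h))))"
      by (rule PROD) (use h h' True b b' in auto)
    have c1: "al (m (iv h') h) (b * u (iv (m (iv h') h))) \<in> D (dd h')"
      by (rule c_in) (use h h' True b in auto)
    show ?thesis unfolding 1 2
      by (intro conjI E_gen h' D_mult b' c1) (use h' in auto)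
  next
    case False
    then show ?thesis using ZERO E_0 by metis
  qed
qed

lemma E_mult: assumes x: "x \<in> E a" and f: "f \<in> E g"
  shows "x * f \<in> E g \<and> f * x \<in> E g"
  using x
proof (rule E_induct)
  show "0 * f \<in> E g \<and> f * 0 \<in> E g" using E_0 by simp
next
  fix a c assume "a * f \<in> E g \<and> f * a \<in> E g" "c * f \<in> E g \<and> f * c \<in> E g"
  then show "(a + c) * f \<in> E g \<and> f * (a + c) \<in> E g"
    using E_add by (simp add: distrib_left distrib_right)
next
  fix h b assume "h \<in> G" "le (rr h) (rr a)" "b \<in> D (dd h)"
  then show "gfun h b * f \<in> E g \<and> f * gfun h b \<in> E g" using gen_mult f by blast
qed

lemma S_addcl: "addcl (objects G m iv) E"
  unfolding addcl_def using E_0 E_add by auto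

lemma S_induct: assumes "x \<in> S" "P 0" "\<And>a b. P a \<Longrightarrow> P b \<Longrightarrow> P (a + b)"
  "\<And>e y. e \<in> objects G m iv \<Longrightarrow> y \<in> E e \<Longrightarrow> P y"
  shows "P x"
proof -
  have "x \<in> set_sum (objects G m iv) E" using assms(1) unfolding S_def .
  then show ?thesis
  proof (rule set_sum_induct)
    show "P 0" by (rule assms(2))
    fix a b assume "P a" "P b" then show "P (a + b)" by (rule assms(3))
  next
    fix i y assume "i \<in> objects G m iv" "y \<in> E i"
    then show "P y" by (rule assms(4))
  qed
qed

lemma S_add: "x \<in> S \<Longrightarrow> y \<in> S \<Longrightarrow> x + y \<in> S"
  unfolding S_def by (rule set_sum_add[OF S_addcl])

lemma E_S: "e \<in> objects G m iv \<Longrightarrow> E e \<subseteq> S"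
  unfolding S_def using set_sum_in[of e "objects G m iv" _ E] by blast

lemma S_Emult: assumes r: "r \<in> S" and x: "x \<in> E g" shows "r * x \<in> E g \<and> x * r \<in> E g"
  using r
proof (rule S_induct)
  show "0 * x \<in> E g \<and> x * 0 \<in> E g" using E_0 by simp
next
  fix a c assume "a * x \<in> E g \<and> x * a \<in> E g" "c * x \<in> E g \<and> x * c \<in> E g"
  then show "(a + c) * x \<in> E g \<and> x * (a + c) \<in> E g"
    using E_add by (simp add: distrib_left distrib_right)
next
  fix e y assume "e \<in> objects G m iv" "y \<in> E e"
  then show "y * x \<in> E g \<and> x * y \<in> E g" using E_mult x by blast
qed

lemma S_subring: "is_subring S"
  unfolding is_subring_def
proof (intro conjI ballI)
  show "0 \<in> S" unfolding S_def by (rule set_sum_0)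
  fix x y assume x: "x \<in> S" and y: "y \<in> S"
  show "x + y \<in> S" using S_add x y by blast
  show "x * y \<in> S" using y
  proof (rule S_induct)
    show "x * 0 \<in> S" unfolding S_def using set_sum_0 by simp
    show "\<And>a b. x * a \<in> S \<Longrightarrow> x * b \<in> S \<Longrightarrow> x * (a + b) \<in> S"
      using S_add by (simp add: distrib_left)
    fix e z assume "e \<in> objects G m iv" "z \<in> E e"
    then show "x * z \<in> S" using S_Emult x E_S by blast
  qed
next
  fix x assume "x \<in> S"
  then show "- x \<in> S" unfolding S_def by (rule set_sum_uminus[rotated]) (use E_neg in auto)
qed

lemma E_ideal_S: "e \<in> objects G m iv \<Longrightarrow> is_ideal (E e) S"
  unfolding is_ideal_def using E_S E_0 E_add E_neg S_Emult by blast

lemma E_ideal_self: "g \<in> G \<Longrightarrow> is_ideal (E g) (E (rr g))"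
  unfolding is_ideal_def using E_rr[of g "rr g"] E_0 E_add E_neg E_mult by auto

lemma ph_supp: "e \<in> G \<Longrightarrow> supp (ph e b) e"
  unfolding supp_def ph_def by auto

lemma sh_into: assumes g: "g \<in> G" and x: "x \<in> E (iv g)" shows "sh g x \<in> E g"
  using x
proof (rule E_induct)
  show "sh g 0 \<in> E g" unfolding sh_0 by (rule E_0)
  show "\<And>a b. sh g a \<in> E g \<Longrightarrow> sh g b \<in> E g \<Longrightarrow> sh g (a + b) \<in> E g"
    by (simp add: sh_add E_add)
  fix h b assume h: "h \<in> G" and hl: "le (rr h) (rr (iv g))" and b: "b \<in> D (dd h)"
  obtain k where k: "k \<in> G" "le k g" "dd k = rr h" using exD[of g "rr h"] hl g h by auto
  have "sh g (gfun h b) = sh g (sh h (ph (dd h) b))" using gen_eq h by simp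
  also have "\<dots> = sh k (sh h (ph (dd h) b))"
    by (rule sh_le[symmetric]) (use k g sh_supp h in simp_all)
  also have "\<dots> = sh (m k h) (ph (dd h) b)"
    by (rule sh_comp) (use k h ph_supp in simp_all)
  also have "\<dots> = gfun (m k h) b" using gen_eq[of "m k h" b] k h by simp
  also have "\<dots> \<in> E g" by (rule E_gen) (use k h b g le_r in simp_all)
  finally show "sh g (gfun h b) \<in> E g" .
qed

lemma sh_inv: assumes g: "g \<in> G" and x: "x \<in> E (iv g)" shows "sh (iv g) (sh g x) = x"
proof -
  have "supp x (dd g)" using E_supp[of "iv g" x] g x by simp
  then have "sh (iv g) (sh g x) = sh (m (iv g) g) x" by (intro sh_comp) (use g in simp_all)
  also have "\<dots> = x" using sh_obj[of "dd g" x] \<open>supp x (dd g)\<close> g by (simp add: m_iv_l)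
  finally show ?thesis .
qed

lemma sh_iso: assumes g: "g \<in> G" shows "ring_iso (sh g) (E (iv g)) (E g)"
  unfolding ring_iso_def ring_hom_on_def
proof (intro conjI ballI)
  show "bij_betw (sh g) (E (iv g)) (E g)"
  proof (rule bij_betw_byWitness[where f' = "sh (iv g)"])
    show "\<forall>a\<in>E (iv g). sh (iv g) (sh g a) = a" using sh_inv g by blast
    show "\<forall>a'\<in>E g. sh g (sh (iv g) a') = a'" using sh_inv[of "iv g"] g by simp
    show "sh g ` E (iv g) \<subseteq> E g" using sh_into g by blast
    show "sh (iv g) ` E g \<subseteq> E (iv g)" using sh_into[of "iv g"] g by auto
  qed
qed (simp_all add: sh_add sh_mult)

end


context gpa begin

lemma ph_0: "ph e 0 = 0"
  unfolding ph_def by (rule ext) (simp add: al_0)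

lemma ph_add: "ph e (a + b) = ph e a + ph e b"
proof (rule ext)
  fix x show "ph e (a + b) x = (ph e a + ph e b) x"
  proof (cases "x \<in> G \<and> rr x = e")
    case True
    have "al (iv x) (a * u x + b * u x) = al (iv x) (a * u x) + al (iv x) (b * u x)"
      by (rule al_add) (use True D_mult u_in in simp_all)
    then show ?thesis unfolding ph_def using True by (simp add: distrib_right)
  next
    case False
    show ?thesis unfolding ph_def plus_fun_def if_not_P[OF False] by simp
  qed
qed

lemma ph_mult: "ph e (a * b) = ph e a * ph e b"
proof (rule ext)
  fix x show "ph e (a * b) x = (ph e a * ph e b) x"
  proof (cases "x \<in> G \<and> rr x = e")
    case True
    have "al (iv x) (a * u x * (b * u x)) = al (iv x) (a * u x) * al (iv x) (b * u x)"
      by (rule al_mult) (use True D_mult u_in in simp_all)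
    moreover have "a * u x * (b * u x) = a * b * u x"
      using True by (intro cidem u_props) simp_all
    ultimately show ?thesis unfolding ph_def using True by simp
  next
    case False
    show ?thesis unfolding ph_def times_fun_def if_not_P[OF False] by simp
  qed
qed

lemma ph_neg: "ph e (- a) = - ph e a"
proof -
  have "ph e (- a) + ph e a = 0" using ph_add[of e "- a" a] ph_0 by simp
  then show ?thesis by (simp add: add_eq_0_iff2)
qed

lemma ph_at: assumes e: "e \<in> objects G m iv" and a: "a \<in> D e" shows "ph e a e = a"
proof -
  have eG: "e \<in> G" "rr e = e" "iv e = e" using e obj_G obj_r obj_iv by auto
  have "ph e a e = al e (a * u e)" unfolding ph_def using eG by simp
  also have "a * u e = a" using D_unit eG a by simp
  finally show ?thesis using al_id e a by simp
qed

lemma ph_gfun: assumes e: "e \<in> objects G m iv" shows "ph e a = gfun e a"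
proof -
  have eG: "e \<in> G" "dd e = e" using e obj_G obj_d by auto
  have "ph e a = sh e (ph e a)" using sh_obj[OF e ph_supp[OF eG(1)]] by simp
  also have "\<dots> = gfun e a" using gen_eq[OF eG(1), of a] eG by simp
  finally show ?thesis .
qed

lemma glob: "globalization G m iv le D al S E sh ph"
  unfolding globalization_def
proof (intro conjI ballI)
  show "ordered_global_action G m iv le S E sh"
    unfolding ordered_global_action_def po_action_def partial_action_def po_cond_def
  proof (intro conjI ballI impI)
    show "is_subring S" by (rule S_subring)
    show "\<And>e. e \<in> objects G m iv \<Longrightarrow> is_ideal (E e) S" by (rule E_ideal_S)
    show "\<And>g. g \<in> G \<Longrightarrow> is_ideal (E g) (E (rr g))" by (rule E_ideal_self)
    show "\<And>g. g \<in> G \<Longrightarrow> ring_iso (sh g) (E (iv g)) (E g)" by (rule sh_iso)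
    show "\<And>e a. e \<in> objects G m iv \<Longrightarrow> a \<in> E e \<Longrightarrow> sh e a = a"
      using sh_obj E_supp obj_G obj_r by metis
    show "S = set_sum (objects G m iv) E" by (rule S_def)
    show "\<And>g h. g \<in> G \<Longrightarrow> h \<in> G \<Longrightarrow> dd g = rr h \<Longrightarrow>
        {a \<in> E (iv h). sh h a \<in> E (iv g) \<inter> E h} \<subseteq> E (iv (m g h))"
    proof -
      fix g h assume "g \<in> G" "h \<in> G" "dd g = rr h"
      then have "E (iv (m g h)) = E (iv h)" by (intro E_rr) simp
      then show "{a \<in> E (iv h). sh h a \<in> E (iv g) \<inter> E h} \<subseteq> E (iv (m g h))" by auto
    qed
    show "\<And>g h a. g \<in> G \<Longrightarrow> h \<in> G \<Longrightarrow> dd g = rr h \<Longrightarrow>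
        a \<in> {a \<in> E (iv h). sh h a \<in> E (iv g) \<inter> E h} \<Longrightarrow> sh g (sh h a) = sh (m g h) a"
    proof -
      fix g h a assume g: "g \<in> G" and h: "h \<in> G" and gh: "dd g = rr h"
        and a: "a \<in> {a \<in> E (iv h). sh h a \<in> E (iv g) \<inter> E h}"
      have "supp a (dd h)" using E_supp[of "iv h" a] a h by simp
      then show "sh g (sh h a) = sh (m g h) a" by (rule sh_comp[OF g h gh])
    qed
    show "\<And>g h. g \<in> G \<Longrightarrow> h \<in> G \<Longrightarrow> le g h \<Longrightarrow> E g \<subseteq> E h"
    proof -
      fix g h assume g: "g \<in> G" and h: "h \<in> G" and gh: "le g h"
      have "le (rr g) (rr h)" using le_r g h gh by simp
      then have "{x \<in> G. le (rr x) (rr g)} \<subseteq> {x \<in> G. le (rr x) (rr h)}"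
        using le_trans[of _ "rr g" "rr h"] g h r_G by blast
      then show "E g \<subseteq> E h" unfolding E_def by (rule set_sum_mono)
    qed
    show "\<And>g h a. g \<in> G \<Longrightarrow> h \<in> G \<Longrightarrow> le g h \<Longrightarrow> a \<in> E (iv g) \<Longrightarrow> sh g a = sh h a"
    proof -
      fix g h a assume g: "g \<in> G" and h: "h \<in> G" and gh: "le g h" and a: "a \<in> E (iv g)"
      have "supp a (dd g)" using E_supp[of "iv g" a] a g by simp
      then show "sh g a = sh h a" by (rule sh_le[OF g h gh])
    qed
    show "\<And>g. g \<in> G \<Longrightarrow> E g = E (rr g)" by (rule E_rr) simp
  qed
next
  fix e assume e: "e \<in> objects G m iv"
  have eG: "e \<in> G" "dd e = e" "rr e = e" using e obj_G obj_d obj_r by auto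
  show "inj_on (ph e) (D e)"
    by (rule inj_onI) (metis ph_at e)
  show "ring_hom_on (ph e) (D e)" unfolding ring_hom_on_def using ph_add ph_mult by simp
  have phE: "ph e a \<in> E e" if "a \<in> D e" for a
    using E_gen[of e e a] ph_gfun[OF e] that eG by simp
  show "ph e ` D e \<subseteq> E e" using phE by blast
  show "is_ideal (ph e ` D e) (E e)"
    unfolding is_ideal_def
  proof (intro conjI ballI)
    show "ph e ` D e \<subseteq> E e" using phE by blast
    show "0 \<in> ph e ` D e" using ph_0 D_0 eG by (metis image_eqI)
    fix x y assume "x \<in> ph e ` D e" "y \<in> ph e ` D e"
    then show "x + y \<in> ph e ` D e" using ph_add D_add eG by (smt (verit) image_iff)
  next
    fix x assume "x \<in> ph e ` D e"
    then show "- x \<in> ph e ` D e" using ph_neg D_neg eG by (smt (verit) image_iff)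
  next
    fix r x assume r: "r \<in> E e" and x: "x \<in> ph e ` D e"
    then obtain a where a: "a \<in> D e" "x = ph e a" by blast
    have xg: "x = gfun e a" using a ph_gfun e by simp
    have "r * x \<in> ph e ` D e \<and> x * r \<in> ph e ` D e"
      using r
    proof (rule E_induct)
      show "0 * x \<in> ph e ` D e \<and> x * 0 \<in> ph e ` D e"
        using ph_0 D_0 eG by (metis image_eqI mult_zero_left mult_zero_right)
    next
      fix p q assume "p * x \<in> ph e ` D e \<and> x * p \<in> ph e ` D e"
        "q * x \<in> ph e ` D e \<and> x * q \<in> ph e ` D e"
      then obtain s1 s2 s3 s4 where "s1 \<in> D e" "p * x = ph e s1" "s2 \<in> D e" "x * p = ph e s2"
        "s3 \<in> D e" "q * x = ph e s3" "s4 \<in> D e" "x * q = ph e s4" by blast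
      then show "(p + q) * x \<in> ph e ` D e \<and> x * (p + q) \<in> ph e ` D e"
        using D_add eG by (simp add: distrib_left distrib_right ph_add[symmetric])
    next
      fix h b assume h: "h \<in> G" "le (rr h) (rr e)" and b: "b \<in> D (dd h)"
      show "gfun h b * x \<in> ph e ` D e \<and> x * gfun h b \<in> ph e ` D e"
      proof (cases "rr h = e")
        case True
        have hh: "rr h = rr e" using True eG by simp
        have 1: "gfun h b * gfun e a = gfun e (al (m (iv e) h) (b * u (iv (m (iv e) h))) * a)"
          by (rule PROD') (use h eG hh b a in simp_all)
        have 2: "gfun e a * gfun h b = gfun e (a * al (m (iv e) h) (b * u (iv (m (iv e) h))))"
          by (rule PROD) (use h eG hh b a in simp_all)
        show ?thesis unfolding xg 1 2 unfolding ph_gfun[OF e, symmetric]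
          by (intro conjI imageI D_mult) (use a eG in simp_all)
      next
        case False
        then have "rr h \<noteq> rr e" using eG by simp
        then have "gfun h b * gfun e a = 0" "gfun e a * gfun h b = 0" using ZERO by metis+
        then show ?thesis using xg ph_0 D_0 eG by (metis image_eqI)
      qed
    qed
    then show "r * x \<in> ph e ` D e" "x * r \<in> ph e ` D e" by auto
  qed
next
  fix g assume g: "g \<in> G"
  show "ph (rr g) ` D g = ph (rr g) ` D (rr g) \<inter> sh g ` ph (dd g) ` D (dd g)"
  proof (intro equalityI subsetI)
    fix z assume "z \<in> ph (rr g) ` D g"
    then obtain c where c: "c \<in> D g" "z = ph (rr g) c" by blast
    define a where "a = al (iv g) c"
    have a: "a \<in> D (iv g)" "al g a = c" unfolding a_def using al_in[of "iv g" c] al_inv' g c by simp_all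
    have "sh g (ph (dd g) a) = gfun g a" using gen_eq g by simp
    also have "\<dots> = ph (rr g) (al g a)"
      unfolding gfun_def ph_def using IDENT[of _ g a] g a by (intro ext) auto
    finally have "z = sh g (ph (dd g) a)" using a c by simp
    moreover have "a \<in> D (dd g)" using D_sub_d g a by auto
    moreover have "c \<in> D (rr g)" using D_sub g c by auto
    ultimately show "z \<in> ph (rr g) ` D (rr g) \<inter> sh g ` ph (dd g) ` D (dd g)" using c by blast
  next
    fix z assume "z \<in> ph (rr g) ` D (rr g) \<inter> sh g ` ph (dd g) ` D (dd g)"
    then obtain c b where c: "c \<in> D (rr g)" "z = ph (rr g) c" and b: "b \<in> D (dd g)"
      "z = sh g (ph (dd g) b)" by blast
    have "z (rr g) = c" using c ph_at[of "rr g" c] g by simp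
    moreover have "z (rr g) = gfun g b (rr g)" using b gen_eq g by simp
    moreover have "gfun g b (rr g) = al g (b * u (iv g))"
    proof -
      have "m (iv g) (rr g) = iv g" using unit_r[of "iv g"] g by simp
      then show ?thesis unfolding gfun_def using g by simp
    qed
    moreover have "al g (b * u (iv g)) \<in> D g" using al_in D_mult u_in g by simp
    ultimately have "c \<in> D g" by simp
    then show "z \<in> ph (rr g) ` D g" using c by blast
  qed
next
  fix g a assume g: "g \<in> G" and a: "a \<in> D (iv g)"
  have "sh g (ph (dd g) a) = gfun g a" using gen_eq g by simp
  also have "\<dots> = ph (rr g) (al g a)"
    unfolding gfun_def ph_def using IDENT[of _ g a] g a by (intro ext) auto
  finally show "sh g (ph (dd g) a) = ph (rr g) (al g a)" .
next
  fix g assume "g \<in> G"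
  show "E g = set_sum {h \<in> G. le (rr h) (rr g)} (\<lambda>h. sh h ` ph (dd h) ` D (dd h))"
    unfolding E_def Gen_def ..
qed

end


lemma pa_D: "partial_action G m iv R D al \<Longrightarrow> (\<forall>e\<in>objects G m iv. is_ideal (D e) R) \<and>
  (\<forall>g\<in>G. is_ideal (D g) (D (gr m iv g))) \<and> (\<forall>g\<in>G. ring_iso (al g) (D (iv g)) (D g))"
  unfolding partial_action_def by (elim conjE) (intro conjI; assumption)

lemma glob_D: "globalization G m iv le D al S E be ph \<Longrightarrow> partial_action G m iv S E be \<and>
  (\<forall>g\<in>G. E g = E (gr m iv g)) \<and>
  (\<forall>e\<in>objects G m iv. inj_on (ph e) (D e) \<and> ring_hom_on (ph e) (D e) \<and> ph e ` D e \<subseteq> E e) \<and>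
  (\<forall>e\<in>objects G m iv. is_ideal (ph e ` D e) (E e)) \<and>
  (\<forall>g\<in>G. ph (gr m iv g) ` D g =
        ph (gr m iv g) ` D (gr m iv g) \<inter> be g ` (ph (gd m iv g) ` D (gd m iv g)))"
  unfolding globalization_def ordered_global_action_def po_action_def
  by (elim conjE) (intro conjI; assumption)

context grpd begin

lemma dir1:
  fixes D :: "'g \<Rightarrow> 'c::ring set" and al :: "'g \<Rightarrow> 'c \<Rightarrow> 'c"
    and S :: "'d::ring set" and E :: "'g \<Rightarrow> 'd set" and be :: "'g \<Rightarrow> 'd \<Rightarrow> 'd"
    and ph :: "'g \<Rightarrow> 'c \<Rightarrow> 'd"
  assumes pa: "partial_action G m iv UNIV D al" and pu: "preunital G m iv UNIV D"
    and gl: "globalization G m iv le D al S E be ph"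
  shows "unital G UNIV D"
  unfolding unital_def
proof (intro ballI)
  fix g assume g: "g \<in> G"
  define r where "r = rr g"
  define d where "d = dd g"
  have robj: "r \<in> objects G m iv" and dobj: "d \<in> objects G m iv" unfolding r_def d_def using g by simp_all
  obtain o1 where o1: "o1 \<in> D r" "\<forall>x\<in>D r. o1 * x = x \<and> x * o1 = x"
    using bspec[OF pu[unfolded preunital_def] robj] by blast
  obtain o2 where o2: "o2 \<in> D d" "\<forall>x\<in>D d. o2 * x = x \<and> x * o2 = x"
    using bspec[OF pu[unfolded preunital_def] dobj] by blast
  note PA = pa_D[OF pa]
  note GL = glob_D[OF gl]
  have Dr: "is_ideal (D r) UNIV" using bspec[OF PA[THEN conjunct1] robj] .
  have Dg: "is_ideal (D g) (D r)" using bspec[OF PA[THEN conjunct2, THEN conjunct1] g] unfolding r_def .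
  have oga1: "partial_action G m iv S E be" by (rule GL[THEN conjunct1])
  have oga2: "\<forall>g\<in>G. E g = E (rr g)" by (rule GL[THEN conjunct2, THEN conjunct1])
  have iso: "ring_iso (be g) (E (iv g)) (E g)"
    using bspec[OF pa_D[OF oga1, THEN conjunct2, THEN conjunct2] g] .
  have Eg: "E g = E r" using oga2 g r_def by blast
  have Eig: "E (iv g) = E d" using bspec[OF oga2, of "iv g"] g d_def by simp
  note GL3 = GL[THEN conjunct2, THEN conjunct2, THEN conjunct1]
  note GL4 = GL[THEN conjunct2, THEN conjunct2, THEN conjunct2, THEN conjunct1]
  note GL5 = GL[THEN conjunct2, THEN conjunct2, THEN conjunct2, THEN conjunct2]
  have phr: "inj_on (ph r) (D r)" "ring_hom_on (ph r) (D r)" "ph r ` D r \<subseteq> E r"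
    using bspec[OF GL3 robj] by blast+
  have phd: "ring_hom_on (ph d) (D d)" "ph d ` D d \<subseteq> E d"
    using bspec[OF GL3 dobj] by blast+
  have Ir: "is_ideal (ph r ` D r) (E r)" using bspec[OF GL4 robj] .
  have Id: "is_ideal (ph d ` D d) (E d)" using bspec[OF GL4 dobj] .
  have ii: "ph r ` D g = ph r ` D r \<inter> be g ` (ph d ` D d)"
    using bspec[OF GL5 g] unfolding r_def d_def .
  have bij: "bij_betw (be g) (E d) (E r)" using iso Eg Eig unfolding ring_iso_def by simp
  have behom: "\<And>x y. x \<in> E d \<Longrightarrow> y \<in> E d \<Longrightarrow> be g (x * y) = be g x * be g y"
    using iso Eig unfolding ring_iso_def ring_hom_on_def by simp
  define e1 where "e1 = ph r o1"
  define f1 where "f1 = be g (ph d o2)"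
  define w where "w = e1 * f1"
  have unitI: "e1 * x = x \<and> x * e1 = x" if xI: "x \<in> ph r ` D r" for x
  proof -
    obtain a where a: "a \<in> D r" "x = ph r a" using xI by blast
    have "ph r (o1 * a) = e1 * x" "ph r (a * o1) = x * e1"
      using phr(2) a(1) o1(1) unfolding ring_hom_on_def e1_def a(2) by blast+
    then show ?thesis using o1 a by simp
  qed
  have unitJ: "f1 * y = y \<and> y * f1 = y" if yJ: "y \<in> be g ` (ph d ` D d)" for y
  proof -
    obtain b where b: "b \<in> D d" "y = be g (ph d b)" using yJ by blast
    have "ph d (o2 * b) = ph d o2 * ph d b" "ph d (b * o2) = ph d b * ph d o2"
      using phd(1) b(1) o2(1) unfolding ring_hom_on_def by blast+
    moreover have "be g (ph d o2 * ph d b) = f1 * y" "be g (ph d b * ph d o2) = y * f1"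
      unfolding f1_def using behom phd(2) b o2 by auto
    ultimately show ?thesis using o2 b by simp
  qed
  have e1I: "e1 \<in> ph r ` D r" unfolding e1_def using o1 by blast
  have e1E: "e1 \<in> E r" using e1I phr(3) by blast
  have f1E: "f1 \<in> E r" unfolding f1_def using bij phd(2) o2 bij_betwE by blast
  have wI: "w \<in> ph r ` D r" unfolding w_def using Ir e1I f1E unfolding is_ideal_def by blast
  obtain z where z: "z \<in> E d" "be g z = e1" using bij e1E by (metis bij_betw_iff_bijections)
  have "z * ph d o2 \<in> ph d ` D d" using Id z o2 unfolding is_ideal_def by blast
  moreover have "be g (z * ph d o2) = w" unfolding w_def f1_def using behom z phd(2) o2 by auto
  ultimately have wJ: "w \<in> be g ` (ph d ` D d)" by blast
  have unitW: "w * x = x \<and> x * w = x" if "x \<in> ph r ` D r \<inter> be g ` (ph d ` D d)" for x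
  proof -
    have "w * x = e1 * (f1 * x)" unfolding w_def by (simp add: mult.assoc)
    moreover have "x * w = (x * e1) * f1" unfolding w_def by (simp add: mult.assoc)
    ultimately show ?thesis using unitI unitJ that by simp
  qed
  have "w \<in> ph r ` D g" unfolding ii using wI wJ by (rule IntI)
  then obtain v where v: "v \<in> D g" "ph r v = w" by (elim imageE) simp
  have DgDr: "D g \<subseteq> D r" using Dg unfolding is_ideal_def by blast
  have vr: "v \<in> D r" using v DgDr by blast
  have vunit: "v * a = a \<and> a * v = a" if a: "a \<in> D g" for a
  proof -
    have ar: "a \<in> D r" using a DgDr by blast
    have "ph r a \<in> ph r ` D g" using a by (rule imageI)
    then have "ph r a \<in> ph r ` D r \<inter> be g ` (ph d ` D d)" unfolding ii .
    then have 1: "w * ph r a = ph r a" "ph r a * w = ph r a" using unitW by auto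
    have "ph r (v * a) = ph r v * ph r a" "ph r (a * v) = ph r a * ph r v"
      using phr(2) vr ar unfolding ring_hom_on_def by simp_all
    moreover have "v * a \<in> D r" "a * v \<in> D r" using Dr ar unfolding is_ideal_def by simp_all
    ultimately show ?thesis using 1 v(2) phr(1) ar unfolding inj_on_def by metis
  qed
  have yv: "y * v \<in> D g" for y
  proof -
    have "y * v = (y * o1) * v" using o1 vr by (simp add: mult.assoc)
    moreover have "y * o1 \<in> D r" using Dr o1 unfolding is_ideal_def by simp
    ultimately show ?thesis using Dg v unfolding is_ideal_def by simp
  qed
  have vy: "v * y \<in> D g" for y
  proof -
    have "v * y = v * (o1 * y)" using o1 vr by (metis mult.assoc)
    moreover have "o1 * y \<in> D r" using Dr o1 unfolding is_ideal_def by simp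
    ultimately show ?thesis using Dg v unfolding is_ideal_def by simp
  qed
  show "\<exists>u\<in>UNIV. u * u = u \<and> (\<forall>x\<in>UNIV. x * u = u * x) \<and> D g = (\<lambda>x. x * u) ` UNIV"
  proof (intro bexI conjI ballI)
    show "v * v = v" using vunit v by simp
    fix x
    have "x * v = v * (x * v)" using vunit yv by simp
    also have "\<dots> = (v * x) * v" by (simp add: mult.assoc)
    also have "\<dots> = v * x" using vunit vy by simp
    finally show "x * v = v * x" .
  next
    show "D g = (\<lambda>x. x * v) ` UNIV"
    proof (intro equalityI subsetI)
      fix a assume "a \<in> D g" then show "a \<in> (\<lambda>x. x * v) ` UNIV" using vunit by (metis rangeI)
    next
      fix a assume "a \<in> (\<lambda>x. x * v) ` UNIV" then show "a \<in> D g" using yv by blast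
    qed
  qed simp
qed

end

theorem mainTheorem1:
  fixes G :: "'g set" and m :: "'g \<Rightarrow> 'g \<Rightarrow> 'g" and iv :: "'g \<Rightarrow> 'g"
    and le :: "'g \<Rightarrow> 'g \<Rightarrow> bool"
    and D :: "'g \<Rightarrow> 'a::ring set" and al :: "'g \<Rightarrow> 'a \<Rightarrow> 'a"
  assumes "ordered_groupoid G m iv le"
    and "po_action G m iv le (UNIV :: 'a set) D al"
    and "preunital G m iv (UNIV :: 'a set) D"
  shows "((\<exists>(S :: 'b::ring set) E be ph. globalization G m iv le D al S E be ph)
            \<longrightarrow> unital G (UNIV :: 'a set) D)
       \<and> (unital G (UNIV :: 'a set) D
            \<longrightarrow> (\<exists>(S :: ('g \<Rightarrow> 'a) set) E be ph. globalization G m iv le D al S E be ph))"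
proof (intro conjI impI)
  have grp: "groupoid G m iv" using assms(1) unfolding ordered_groupoid_def by blast
  interpret grpd G m iv by (rule grpd.intro[OF grp])
  have pa: "partial_action G m iv UNIV D al" using assms(2) unfolding po_action_def by blast
  assume "\<exists>(S :: 'b::ring set) E be ph. globalization G m iv le D al S E be ph"
  then obtain S :: "'b set" and E be ph where "globalization G m iv le D al S E be ph" by blast
  then show "unital G UNIV D" using dir1 pa assms(3) by blast
next
  have grp: "groupoid G m iv" using assms(1) unfolding ordered_groupoid_def by blast
  assume u: "unital G UNIV D"
  interpret gpa G m iv le D al
    by (intro gpa.intro ogrpd.intro grpd.intro gpa_axioms.intro ogrpd_axioms.intro grp assms(1,2) u)
  show "\<exists>(S :: ('g \<Rightarrow> 'a) set) E be ph. globalization G m iv le D al S E be ph"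
    using glob by blast
qed


end
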